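(* Let $\mathcal{T}_{5,1}$ be the set of $s\in\mathcal{A}^*$ with $|s|\ne\mathsf{rmin}(s)+1$, $\mathrm{sebr}(s)\ne0$, $\mathrm{sebr}(s)>\mathrm{Rmin}(s)_{\mathsf{rpos}(s)+1}$ and $\mathrm{Prm}(s)_{\mathsf{rpos}(s)+1}=\mathrm{Prm}(s)_{\mathsf{rpos}(s)}+1$. For every $n$ there is a bijection $f_{5,1}$ from $\mathcal{T}_{5,1}\cap\mathcal{A}_n$ onto the set of $s\in\mathcal{A}_n$ such that $\mathsf{rpos}(s)\ne0$, the rightmost occurrence of $\mathrm{Rmin}(s)_{\mathsf{rpos}(s)-1}$ is adjacent to the second rightmost occurrence of $\mathrm{Rmin}(s)_{\mathsf{rpos}(s)}$, and the two rightmost occurrences of $\mathrm{Rmin}(s)_{\mathsf{rpos}(s)}$ are not adjacent and have no $\mathcal{M}$asc between them. Moreover for all $s$: $\mathsf{asc},\mathsf{rep},\mathsf{max},\mathsf{ealm},\mathsf{rmin}$ take equal values on $s$ and $f_{5,1}(s)$, $\mathsf{rpos}(s)=\mathsf{rpos}(f_{5,1}(s))-1$, and $\mathsf{zero}(s)=\mathsf{zero}(f_{5,1}(s))+\chi(\mathsf{rpos}(s)=0)$.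
   Context: For a sequence $s$, $\mathsf{asc}(s)=|\{i:s_i<s_{i+1}\}|$. An ascent sequence is a sequence $s=(s_1,\dots,s_n)$ of non-negative integers with $s_1=0$, $s_i\le\mathsf{asc}(s_1,\dots,s_{i-1})+1$ for $i\ge2$; $\mathcal{A}_n$ is the set of those of length $n$, $|s|$ the length; $\mathcal{A}^*$ is the set of all ascent sequences except those of the form $(0,1,\dots,|s|-1)$. $\mathsf{rep}(s)=|s|-|\{s_i\}|$; $\mathsf{zero}(s)=|\{i:s_i=0\}|$; $\mathsf{max}(s)=|\{i:s_i=i-1\}|$; $\mathsf{ealm}(s)=s_{\mathsf{max}(s)+1}$ if $\mathsf{max}(s)\ne|s|$, else $0$. A right-to-left minimum is an entry $s_i$ with $s_i<s_j$ for all $j>i$; $\mathsf{rmin}(s)$ is their number; they are indexed $0,\dots,\mathsf{rmin}(s)-1$ from left to right, with values $\mathrm{Rmin}(s)_m$ and positions $\mathrm{Prm}(s)_m$. $\mathsf{rpos}(s)$: $0$ if $\mathsf{rmin}(s)=|s|$; otherwise the maximal $m$ such that the value $\mathrm{Rmin}(s)_m$ occurs at least twice after position $\mathrm{Prm}(s)_{m-1}$ (for $m=0$: at least twice in $s$), and $0$ if none. $\mathrm{sebr}(s)$ is the smallest entry strictly between the two rightmost occurrences of $\mathrm{Rmin}(s)_{\mathsf{rpos}(s)}$, and $0$ if they are adjacent; when $\mathsf{rpos}(s)=\mathsf{rmin}(s)-1$ one regards $\mathrm{sebr}(s)<\mathrm{Rmin}(s)_{\mathsf{rpos}(s)+1}$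 as true. An entry $s_i$ is an $\mathcal{M}$asc if $s_i=\mathsf{asc}(s_1,\dots,s_{i-1})+1$. $\chi(P)=1$ if $P$ holds, else $0$. *)

theory Defs
  imports Main
begin

(* Sequences are lists of naturals; list index j (0-based) corresponds to paper position j+1. *)

definition asc :: "nat list \<Rightarrow> nat" where
  "asc s = card {i. Suc i < length s \<and> s ! i < s ! Suc i}"

definition is_ascent :: "nat list \<Rightarrow> bool" where
  "is_ascent s \<longleftrightarrow> s \<noteq> [] \<and> s ! 0 = 0 \<and>
     (\<forall>i. 1 \<le> i \<and> i < length s \<longrightarrow> s ! i \<le> asc (take i s) + 1)"

definition ascA :: "nat \<Rightarrow> nat list set" where
  "ascA n = {s. is_ascent s \<and> length s = n}"

definition ascAstar :: "nat list set" where
  "ascAstar = {s. is_ascent s \<and> s \<noteq> [0..<length s]}"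

definition rep :: "nat list \<Rightarrow> nat" where
  "rep s = length s - card (set s)"

definition zero :: "nat list \<Rightarrow> nat" where
  "zero s = card {i. i < length s \<and> s ! i = 0}"

(* paper: s_i = i - 1 with 1-based i; here s!j = j with 0-based j *)
definition maxst :: "nat list \<Rightarrow> nat" where
  "maxst s = card {j. j < length s \<and> s ! j = j}"

(* paper: s_{max(s)+1} (1-based) = s ! max(s) (0-based) *)
definition ealm :: "nat list \<Rightarrow> nat" where
  "ealm s = (if maxst s \<noteq> length s then s ! maxst s else 0)"

definition Prm :: "nat list \<Rightarrow> nat list" where
  "Prm s = filter (\<lambda>i. \<forall>j. i < j \<and> j < length s \<longrightarrow> s ! i < s ! j) [0..<length s]"

definition Rmin :: "nat list \<Rightarrow> nat list" where
  "Rmin s = map (\<lambda>i. s ! i) (Prm s)"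

definition rmin :: "nat list \<Rightarrow> nat" where
  "rmin s = length (Prm s)"

definition occ_after :: "nat list \<Rightarrow> nat \<Rightarrow> nat \<Rightarrow> nat" where
  "occ_after s m v = card {j. j < length s \<and> (m = 0 \<or> Prm s ! (m - 1) < j) \<and> s ! j = v}"

definition rpos :: "nat list \<Rightarrow> nat" where
  "rpos s = (if rmin s = length s then 0
     else if (\<exists>m < rmin s. 2 \<le> occ_after s m (Rmin s ! m))
       then (GREATEST m. m < rmin s \<and> 2 \<le> occ_after s m (Rmin s ! m))
       else 0)"

definition occs :: "nat list \<Rightarrow> nat \<Rightarrow> nat list" where
  "occs s v = filter (\<lambda>j. s ! j = v) [0..<length s]"

definition occ_last :: "nat list \<Rightarrow> nat \<Rightarrow> nat" where
  "occ_last s v = last (occs s v)"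

definition occ_2nd_last :: "nat list \<Rightarrow> nat \<Rightarrow> nat" where
  "occ_2nd_last s v = occs s v ! (length (occs s v) - 2)"

definition sebr :: "nat list \<Rightarrow> nat" where
  "sebr s = (let v = Rmin s ! rpos s; p1 = occ_2nd_last s v; p2 = occ_last s v in
     if length (occs s v) < 2 \<or> p2 = Suc p1 then 0
     else Min {s ! j | j. p1 < j \<and> j < p2})"

definition Masc :: "nat list \<Rightarrow> nat \<Rightarrow> bool" where
  "Masc s j \<longleftrightarrow> s ! j = asc (take j s) + 1"

(* T_{5,1}; the convention "sebr(s) < Rmin(s)_{rpos(s)+1} is true when rpos(s) = rmin(s)-1"
   makes the condition sebr(s) > Rmin(s)_{rpos(s)+1} require rpos(s)+1 < rmin(s). *)
definition T51 :: "nat list set" where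
  "T51 = {s \<in> ascAstar. length s \<noteq> rmin s + 1 \<and> sebr s \<noteq> 0 \<and>
      rpos s + 1 < rmin s \<and> sebr s > Rmin s ! (rpos s + 1) \<and>
      Prm s ! (rpos s + 1) = Prm s ! rpos s + 1}"

definition target51 :: "nat \<Rightarrow> nat list set" where
  "target51 n = {s \<in> ascA n. rpos s \<noteq> 0 \<and>
     (let q = occ_last s (Rmin s ! (rpos s - 1));
          v = Rmin s ! rpos s; p1 = occ_2nd_last s v; p2 = occ_last s v in
      (q = Suc p1 \<or> p1 = Suc q) \<and> p2 \<noteq> Suc p1 \<and>
      \<not> (\<exists>j. p1 < j \<and> j < p2 \<and> Masc s j))}"

end

theory Submission
  imports Defs
begin



fun ascl :: "nat list \<Rightarrow> nat" where
  "ascl [] = 0" | "ascl [x] = 0" | "ascl (x # y # zs) = (if x < y then 1 else 0) + ascl (y # zs)"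

lemma asc_Cons2: "asc (x # y # zs) = (if x < y then 1 else 0) + asc (y # zs)"
proof -
  let ?S = "{i. Suc i < length (y#zs) \<and> (y#zs)!i < (y#zs)!Suc i}"
  have e: "{i. Suc i < length (x#y#zs) \<and> (x#y#zs)!i < (x#y#zs)!Suc i} =
        (if x<y then {0} else {}) \<union> Suc ` ?S"
  proof (intro set_eqI iffI)
    fix i assume "i \<in> {i. Suc i < length (x#y#zs) \<and> (x#y#zs)!i < (x#y#zs)!Suc i}"
    then show "i \<in> (if x<y then {0} else {}) \<union> Suc ` ?S"
      by (cases i) auto
  next
    fix i assume "i \<in> (if x<y then {0} else {}) \<union> Suc ` ?S"
    then show "i \<in> {i. Suc i < length (x#y#zs) \<and> (x#y#zs)!i < (x#y#zs)!Suc i}"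
      by (auto split: if_splits)
  qed
  have f: "finite ?S" by (rule finite_subset[of _ "{..<length (y#zs)}"]) auto
  have "card ((if x<y then {0} else {}) \<union> Suc ` ?S) = (if x < y then 1 else 0) + card ?S"
    using f by (auto simp: card_image)
  then show ?thesis unfolding asc_def e by simp
qed

lemma asc_ascl: "asc s = ascl s"
  by (induction s rule: ascl.induct) (simp_all add: asc_Cons2, simp_all add: asc_def)

lemma ascl_append: "ascl (xs @ ys) = ascl xs + ascl ys + (if xs \<noteq> [] \<and> ys \<noteq> [] \<and> last xs < hd ys then 1 else 0)"
proof (induction xs rule: ascl.induct)
  case (2 x) then show ?case by (cases ys) auto
qed auto

lemma ascl_le: "ascl xs \<le> length xs - 1"
  by (induction xs rule: ascl.induct) auto

lemma ascl_full: "ascl xs = length xs - 1 \<Longrightarrow> Suc i < length xs \<Longrightarrow> xs!i < xs!Suc i"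
proof (induction xs arbitrary: i rule: ascl.induct)
  case (3 x y zs)
  have le: "ascl (y#zs) \<le> length zs" using ascl_le[of "y#zs"] by simp
  then have xy: "x < y" and e: "ascl (y#zs) = length (y#zs) - 1" using 3(2) by (auto split: if_splits)
  show ?case
  proof (cases i)
    case 0 then show ?thesis using xy by simp
  next
    case (Suc j) then show ?thesis using 3(1)[OF e, of j] 3(3) by simp
  qed
qed auto

lemma ascl_mono: "ascl xs \<le> ascl (xs @ ys)"
  by (simp add: ascl_append)

definition is_rm :: "nat list \<Rightarrow> nat \<Rightarrow> bool" where
  "is_rm s i \<longleftrightarrow> i < length s \<and> (\<forall>j. i < j \<and> j < length s \<longrightarrow> s!i < s!j)"

lemma Prm_filter: "Prm s = filter (is_rm s) [0..<length s]"
  unfolding Prm_def is_rm_def by (rule filter_cong) auto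

lemma set_Prm: "set (Prm s) = {i. is_rm s i}"
  by (auto simp: Prm_filter is_rm_def)

lemma Prm_sorted: "sorted_wrt (<) (Prm s)"
  by (simp add: Prm_filter sorted_wrt_filter)

lemma is_rm_drop: "is_rm s i \<longleftrightarrow> i < length s \<and> (\<forall>x\<in>set (drop (Suc i) s). s!i < x)"
proof -
  have "x \<in> set (drop (Suc i) s) \<longleftrightarrow> (\<exists>j. Suc i \<le> j \<and> j < length s \<and> x = s!j)" for x
  proof
    assume "x \<in> set (drop (Suc i) s)"
    then obtain k where "k < length (drop (Suc i) s)" "x = drop (Suc i) s ! k" by (auto simp: in_set_conv_nth)
    then show "\<exists>j. Suc i \<le> j \<and> j < length s \<and> x = s!j" by (intro exI[of _ "Suc i + k"]) auto
  next
    assume "\<exists>j. Suc i \<le> j \<and> j < length s \<and> x = s!j"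
    then obtain j where j: "Suc i \<le> j" "j < length s" "x = s!j" by blast
    then have "drop (Suc i) s ! (j - Suc i) = x" "j - Suc i < length (drop (Suc i) s)" by auto
    then show "x \<in> set (drop (Suc i) s)" by (metis nth_mem)
  qed
  then show ?thesis unfolding is_rm_def by (auto simp: Suc_le_eq)
qed

lemma Prm_nth_rm: "m < rmin s \<Longrightarrow> is_rm s (Prm s ! m)"
  using nth_mem[of m "Prm s"] set_Prm[of s] unfolding rmin_def by auto

lemma Prm_less: "m < m' \<Longrightarrow> m' < rmin s \<Longrightarrow> Prm s ! m < Prm s ! m'"
  using sorted_wrt_nth_less[OF Prm_sorted] unfolding rmin_def by blast

lemma Prm_less_rev: "m < rmin s \<Longrightarrow> m' < rmin s \<Longrightarrow> Prm s ! m < Prm s ! m' \<Longrightarrow> m < m'"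
  by (metis Prm_less linorder_neqE_nat order_less_asym)

lemma Prm_index: "is_rm s i \<Longrightarrow> \<exists>m<rmin s. Prm s ! m = i"
  using set_Prm[of s] unfolding rmin_def by (metis in_set_conv_nth mem_Collect_eq)

lemma Rmin_nth: "m < rmin s \<Longrightarrow> Rmin s ! m = s ! (Prm s ! m)"
  unfolding Rmin_def rmin_def by simp

lemma length_Rmin: "length (Rmin s) = rmin s"
  unfolding Rmin_def rmin_def by simp

lemma Rmin_less: "m < m' \<Longrightarrow> m' < rmin s \<Longrightarrow> Rmin s ! m < Rmin s ! m'"
proof -
  assume a: "m < m'" "m' < rmin s"
  have "is_rm s (Prm s ! m)" using a by (intro Prm_nth_rm) auto
  moreover have "Prm s ! m < Prm s ! m'" using a by (rule Prm_less)
  moreover have "Prm s ! m' < length s" using Prm_nth_rm[OF a(2)] unfolding is_rm_def by auto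
  ultimately show ?thesis using a by (auto simp: Rmin_nth is_rm_def)
qed

lemma rpos_max: "rmin s \<noteq> length s \<Longrightarrow> rpos s < m \<Longrightarrow> m < rmin s \<Longrightarrow> occ_after s m (Rmin s ! m) < 2"
proof -
  assume a: "rmin s \<noteq> length s" "rpos s < m" "m < rmin s"
  let ?P = "\<lambda>m. m < rmin s \<and> 2 \<le> occ_after s m (Rmin s ! m)"
  show ?thesis
  proof (rule ccontr)
    assume "\<not> ?thesis"
    then have Pm: "?P m" using a by auto
    then have ex: "\<exists>m < rmin s. 2 \<le> occ_after s m (Rmin s ! m)" by blast
    have "m \<le> Greatest ?P" by (rule Greatest_le_nat[of ?P m "rmin s"]) (use Pm in auto)
    moreover have "rpos s = Greatest ?P" using a(1) ex unfolding rpos_def by simp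
    ultimately show False using a(2) by simp
  qed
qed

lemma rpos_pos: "rpos s \<noteq> 0 \<Longrightarrow> rmin s \<noteq> length s \<and> rpos s < rmin s \<and> 2 \<le> occ_after s (rpos s) (Rmin s ! rpos s)"
proof -
  assume a: "rpos s \<noteq> 0"
  let ?P = "\<lambda>m. m < rmin s \<and> 2 \<le> occ_after s m (Rmin s ! m)"
  have ne: "rmin s \<noteq> length s"
  proof
    assume "rmin s = length s" then have "rpos s = 0" unfolding rpos_def by simp
    then show False using a by simp
  qed
  have ex: "\<exists>m < rmin s. 2 \<le> occ_after s m (Rmin s ! m)"
  proof (rule ccontr)
    assume na: "\<not> (\<exists>m < rmin s. 2 \<le> occ_after s m (Rmin s ! m))"
    have "rpos s = 0" unfolding rpos_def using na ne by (simp only: if_False if_True)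
    then show False using a by simp
  qed
  have e: "rpos s = Greatest ?P" using ne ex unfolding rpos_def by simp
  have g: "?P (Greatest ?P)"
    by (rule GreatestI_ex_nat[where b="rmin s"]) (use ex in blast, simp)
  have "?P (rpos s)" using g unfolding e[symmetric] .
  then show ?thesis using ne by blast
qed

lemma rpos_eqI: "rmin s \<noteq> length s \<Longrightarrow> r < rmin s \<Longrightarrow> 2 \<le> occ_after s r (Rmin s ! r) \<Longrightarrow>
   (\<forall>m. r < m \<and> m < rmin s \<longrightarrow> occ_after s m (Rmin s ! m) < 2) \<Longrightarrow> rpos s = r"
proof -
  assume a: "rmin s \<noteq> length s" "r < rmin s" "2 \<le> occ_after s r (Rmin s ! r)"
    "\<forall>m. r < m \<and> m < rmin s \<longrightarrow> occ_after s m (Rmin s ! m) < 2"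
  let ?P = "\<lambda>m. m < rmin s \<and> 2 \<le> occ_after s m (Rmin s ! m)"
  have "Greatest ?P = r"
  proof (rule Greatest_equality)
    show "?P r" using a by simp
  next
    fix y assume y: "?P y"
    show "y \<le> r"
    proof (rule ccontr)
      assume "\<not> y \<le> r"
      then have "occ_after s y (Rmin s ! y) < 2" using a(4) y by simp
      then show False using y by simp
    qed
  qed
  moreover have "\<exists>m < rmin s. 2 \<le> occ_after s m (Rmin s ! m)" using a by blast
  ultimately show ?thesis using a(1) unfolding rpos_def by simp
qed

lemma occs_two:
  assumes "i < j" "j < length s" "s!i = v" "s!j = v" "\<forall>x. i<x \<and> x<j \<longrightarrow> s!x \<noteq> v"
    "\<forall>x. j<x \<and> x<length s \<longrightarrow> s!x \<noteq> v"
  shows "occs s v = filter (\<lambda>x. s!x = v) [0..<i] @ [i, j]"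
proof -
  have u: "[0..<length s] = [0..<i] @ i # [Suc i..<j] @ j # [Suc j..<length s]"
  proof -
    have "[0..<length s] = [0..<i] @ [i..<length s]" using assms upt_add_eq_append[of 0 i "length s - i"] by auto
    also have "[i..<length s] = i # [Suc i..<length s]" using assms by (simp add: upt_conv_Cons)
    also have "[Suc i..<length s] = [Suc i..<j] @ [j..<length s]" using assms upt_add_eq_append[of "Suc i" j "length s - j"] by auto
    also have "[j..<length s] = j # [Suc j..<length s]" using assms by (simp add: upt_conv_Cons)
    finally show ?thesis by simp
  qed
  have f1: "filter (\<lambda>x. s!x = v) [Suc i..<j] = []" using assms by (auto simp: filter_empty_conv)
  have f2: "filter (\<lambda>x. s!x = v) [Suc j..<length s] = []" using assms by (auto simp: filter_empty_conv)
  show ?thesis unfolding occs_def by (subst u) (simp add: f1 f2 assms)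
qed

lemma occs_two_conseq:
  assumes "i < j" "j < length s" "s!i = v" "s!j = v" "\<forall>x. i<x \<and> x<j \<longrightarrow> s!x \<noteq> v"
    "\<forall>x. j<x \<and> x<length s \<longrightarrow> s!x \<noteq> v"
  shows "occ_last s v = j" "occ_2nd_last s v = i" "2 \<le> length (occs s v)"
  using occs_two[OF assms] unfolding occ_last_def occ_2nd_last_def by (auto simp: nth_append)

lemma occs_one:
  assumes "j < length s" "s!j = v" "\<forall>x. j<x \<and> x<length s \<longrightarrow> s!x \<noteq> v"
  shows "occ_last s v = j"
proof -
  have u: "[0..<length s] = [0..<j] @ j # [Suc j..<length s]"
    using assms upt_add_eq_append[of 0 j "length s - j"] by (auto simp: upt_conv_Cons)
  have f2: "filter (\<lambda>x. s!x = v) [Suc j..<length s] = []" using assms by (auto simp: filter_empty_conv)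
  show ?thesis unfolding occs_def occ_last_def by (subst u) (simp add: f2 assms)
qed

lemma ascent_le: "is_ascent s \<Longrightarrow> 1 \<le> i \<Longrightarrow> i < length s \<Longrightarrow> s!i \<le> ascl (take i s) + 1"
  unfolding is_ascent_def by (simp add: asc_ascl)

lemma ascent_fix:
  assumes "is_ascent s" "j < length s" "s!j = j" "i \<le> j"
  shows "s!i = i"
proof (cases "j = 0")
  case True then show ?thesis using assms by simp
next
  case False
  have h0: "s!0 = 0" using assms unfolding is_ascent_def by auto
  have "j \<le> ascl (take j s) + 1" using ascent_le[OF assms(1), of j] assms False by auto
  moreover have "ascl (take j s) \<le> j - 1" using ascl_le[of "take j s"] assms by auto
  ultimately have "ascl (take j s) = length (take j s) - 1" using assms False by auto
  then have inc: "Suc k < j \<Longrightarrow> s!k < s!Suc k" for k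
    using ascl_full[of "take j s" k] assms by auto
  have ge: "k < j \<Longrightarrow> k \<le> s!k" for k
  proof (induction k)
    case 0 then show ?case by simp
  next
    case (Suc k) then show ?case using inc[of k] by auto
  qed
  have le: "k < length s \<Longrightarrow> s!k \<le> k" for k
  proof (cases "k = 0")
    case True then show ?thesis using h0 by simp
  next
    case False
    assume "k < length s"
    then have "s!k \<le> ascl (take k s) + 1" using ascent_le[OF assms(1), of k] False by auto
    moreover have "ascl (take k s) \<le> k - 1" using ascl_le[of "take k s"] by auto
    ultimately show ?thesis using False by auto
  qed
  show ?thesis
  proof (cases "i = j")
    case True then show ?thesis using assms by simp
  next
    case False then show ?thesis using ge[of i] le[of i] assms by auto
  qed
qed

lemma maxst_le:
  assumes "is_ascent s" "i0 < length s" "s!i0 \<noteq> i0"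
  shows "{j. j < length s \<and> s!j = j} \<subseteq> {..<i0}"
proof
  fix j assume "j \<in> {j. j < length s \<and> s!j = j}"
  then have j: "j < length s" "s!j = j" by auto
  show "j \<in> {..<i0}"
  proof (rule ccontr)
    assume "j \<notin> {..<i0}"
    then have "i0 \<le> j" by simp
    then show False using ascent_fix[OF assms(1) j, of i0] assms(3) by simp
  qed
qed




lemma ascl_Cons: "ascl (x # ys) = ascl ys + (if ys \<noteq> [] \<and> x < hd ys then 1 else 0)"
  by (cases ys) auto

lemma ascl_swap:
  assumes "u < v" "B \<noteq> []" "\<forall>x\<in>set B. v < x"
  shows "ascl (X @ [u] @ B @ [u, v] @ Y) = ascl (X @ [u, v] @ B @ [v] @ Y)"
proof -
  have h: "v < hd B" "v < last B" using assms by auto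
  have 1: "ascl (X @ [u] @ B @ [u, v] @ Y) = ascl (X @ [u]) + ascl (B @ [u, v] @ Y) + 1"
    using ascl_append[of "X @ [u]" "B @ [u, v] @ Y"] assms h by simp
  have 2: "ascl (B @ [u, v] @ Y) = ascl B + ascl ([u, v] @ Y)"
    using ascl_append[of B "[u, v] @ Y"] assms h by simp
  have 3: "ascl ([u, v] @ Y) = 1 + ascl (v # Y)" using assms by simp
  have 4: "ascl (X @ [u, v] @ B @ [v] @ Y) = ascl (X @ [u]) + ascl (v # B @ [v] @ Y) + 1"
    using ascl_append[of "X @ [u]" "v # B @ [v] @ Y"] assms by simp
  have 5: "ascl (v # B @ [v] @ Y) = ascl (B @ [v] @ Y) + 1"
    using ascl_Cons[of v "B @ [v] @ Y"] assms h by (simp del: ascl.simps)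
  have 6: "ascl (B @ [v] @ Y) = ascl B + ascl (v # Y)"
    using ascl_append[of B "[v] @ Y"] assms h by simp
  show ?thesis using 1 2 3 4 5 6 by simp
qed

lemma ascl_ins:
  assumes "u < v" "\<forall>x\<in>set B'. v < x"
  shows "ascl (X @ [u, v] @ B') = ascl (X @ [u] @ B') + 1"
proof (cases "B' = []")
  case True then show ?thesis using ascl_append[of "X @ [u]" "[v]"] assms by simp
next
  case False
  have h: "v < hd B'" using assms False by auto
  have 1: "ascl (X @ [u] @ B') = ascl (X @ [u]) + ascl B' + 1"
    using ascl_append[of "X @ [u]" B'] assms h False by simp
  have 2: "ascl (X @ [u, v] @ B') = ascl (X @ [u]) + ascl (v # B') + 1"
    using ascl_append[of "X @ [u]" "v # B'"] assms by simp
  have 3: "ascl (v # B') = ascl B' + 1" using ascl_Cons[of v B'] h False by (simp del: ascl.simps)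
  show ?thesis using 1 2 3 by simp
qed

lemma is_rm_suffix: "length X = length Y \<Longrightarrow> length X \<le> i \<Longrightarrow> is_rm (Y @ Z) i \<longleftrightarrow> is_rm (X @ Z) i"
  unfolding is_rm_def by (auto simp: nth_append)

lemma drop_len: "n = length X \<Longrightarrow> drop n (X @ Y) = Y" by simp

lemma take_len_plus: "n = length X + j \<Longrightarrow> take n (X @ Y) = X @ take j Y" by simp

locale dec =
  fixes A :: "nat list" and u v :: nat and B C :: "nat list"
  assumes uv: "u < v" and Bne: "B \<noteq> []" and Bgt: "\<forall>x\<in>set B. v < x" and Cgt: "\<forall>x\<in>set C. v < x"
begin

abbreviation "S \<equiv> A @ [u] @ B @ [u, v] @ C"
abbreviation "T \<equiv> A @ [u, v] @ B @ [v] @ C"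
abbreviation "k \<equiv> length A"
abbreviation "l \<equiv> length B"

lemma l_pos: "0 < l" using Bne by simp
lemma hdB: "v < hd B" using Bne Bgt by simp
lemma lenST: "length T = length S" by simp

lemma S_k: "S ! k = u" by simp
lemma T_k: "T ! k = u" by simp
lemma T_k1: "T ! Suc k = v" by (simp add: nth_append)
lemma S_B: "j < l \<Longrightarrow> S ! (k + Suc j) = B ! j" by (simp add: nth_append)
lemma T_B: "j < l \<Longrightarrow> T ! (k + Suc (Suc j)) = B ! j" by (simp add: nth_append)
lemma S_u2: "S ! (k + l + 1) = u" by (simp add: nth_append)
lemma S_v: "S ! (k + l + 2) = v" by (simp add: nth_append)
lemma T_v: "T ! (k + l + 2) = v" by (simp add: nth_append)
lemma ST_A: "i < k \<Longrightarrow> S ! i = T ! i" by (simp add: nth_append)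
lemma ST_C: "k + l + 2 \<le> i \<Longrightarrow> S ! i = T ! i"
proof -
  assume a: "k + l + 2 \<le> i"
  have "S = (A @ [u] @ B @ [u]) @ (v # C)" "T = (A @ [u, v] @ B) @ (v # C)" by simp_all
  moreover have "length (A @ [u] @ B @ [u]) = k + l + 2" "length (A @ [u, v] @ B) = k + l + 2" by simp_all
  ultimately show ?thesis using a by (metis nth_append not_le)
qed

lemma asc_ST: "ascl S = ascl T"
  using ascl_swap[OF uv Bne Bgt, of A C] by simp

lemma take_S_C: "take (k + l + 3 + j) S = A @ [u] @ B @ [u, v] @ take j C"
  using take_len_plus[of "k + l + 3 + j" "A @ [u] @ B @ [u, v]" j C] by simp
lemma take_T_C: "take (k + l + 3 + j) T = A @ [u, v] @ B @ [v] @ take j C"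
  using take_len_plus[of "k + l + 3 + j" "A @ [u, v] @ B @ [v]" j C] by simp
lemma S_C: "S ! (k + l + 3 + j) = C ! j" by (simp add: nth_append)
lemma T_C: "T ! (k + l + 3 + j) = C ! j" by (simp add: nth_append)

lemma asc_prefix_C: "ascl (take (k + l + 3 + j) S) = ascl (take (k + l + 3 + j) T)"
  unfolding take_S_C take_T_C using ascl_swap[OF uv Bne Bgt, of A "take j C"] by simp

lemma B_take_gt: "\<forall>x\<in>set (take j B). v < x" using Bgt by (auto dest: in_set_takeD)

lemma ascent_S_T:
  assumes aS: "is_ascent S"
  shows "is_ascent T" and "\<forall>j<l. T ! (k + Suc (Suc j)) \<noteq> ascl (take (k + Suc (Suc j)) T) + 1"
proof -
  have okS: "1 \<le> i \<Longrightarrow> i < length S \<Longrightarrow> S!i \<le> ascl (take i S) + 1" for i using ascent_le[OF aS] by blast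
  have tB: "j < l \<Longrightarrow> B ! j \<le> ascl (take (k + Suc (Suc j)) T)" for j
  proof -
    assume j: "j < l"
    have "S ! (k + Suc j) \<le> ascl (take (k + Suc j) S) + 1" using okS[of "k + Suc j"] j by (simp add: less_imp_le)
    moreover have "take (k + Suc j) S = A @ [u] @ take j B" using j by simp
    moreover have "take (k + Suc (Suc j)) T = A @ [u, v] @ take j B" using j by simp
    moreover have "ascl (A @ [u, v] @ take j B) = ascl (A @ [u] @ take j B) + 1"
      using ascl_ins[OF uv B_take_gt] by simp
    ultimately show ?thesis using S_B[OF j] by simp
  qed
  show "\<forall>j<l. T ! (k + Suc (Suc j)) \<noteq> ascl (take (k + Suc (Suc j)) T) + 1"
    using tB T_B by fastforce
  have hB: "hd B \<le> ascl (A @ [u]) + 1"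
  proof -
    have "B ! 0 \<le> ascl (take (k + Suc (Suc 0)) T)" using tB[of 0] l_pos by simp
    moreover have "take (k + Suc (Suc 0)) T = A @ [u, v]" by simp
    moreover have "ascl (A @ [u, v]) = ascl (A @ [u]) + 1" using ascl_ins[OF uv, of "[]" A] by simp
    ultimately show ?thesis using Bne by (simp add: hd_conv_nth)
  qed
  have okT: "T!i \<le> ascl (take i T) + 1" if i: "1 \<le> i" "i < length T" for i
  proof -
    consider "i \<le> k" | "i = Suc k" | j where "j < l" "i = k + Suc (Suc j)" | "i = k + l + 2"
      | j where "i = k + l + 3 + j"
    proof -
      consider (a) "i \<le> k" | (b) "i = Suc k" | (c) "Suc (Suc k) \<le> i" "i < k + l + 2" | (d) "i = k + l + 2"
        | (e) "k + l + 3 \<le> i" by linarith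
      then show thesis
      proof cases
        case c then show thesis using that(3)[of "i - Suc (Suc k)"] by simp
      next
        case e then show thesis using that(5)[of "i - (k + l + 3)"] by simp
      qed (use that in auto)
    qed
    then show ?thesis
    proof cases
      case 1
      have "T ! i = S ! i" using 1 by (cases "i = k") (auto simp: nth_append)
      moreover have "take i T = take i S" using 1 by simp
      ultimately show ?thesis using okS[of i] i by simp
    next
      case 2
      have "take i T = A @ [u]" using 2 by simp
      then show ?thesis using 2 T_k1 hB hdB by simp
    next
      case 3
      then show ?thesis using tB[of j] T_B[of j] by simp
    next
      case 4
      have "take i T = A @ [u, v] @ B" using 4 by simp
      moreover have "ascl (A @ [u, v]) \<le> ascl (A @ [u, v] @ B)" using ascl_mono[of "A @ [u, v]" B] by simp
      moreover have "ascl (A @ [u, v]) = ascl (A @ [u]) + 1" using ascl_ins[OF uv, of "[]" A] by simp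
      ultimately show ?thesis using 4 T_v hB hdB by simp
    next
      case 5
      then have "S ! i \<le> ascl (take i S) + 1" using okS[of i] i by simp
      then show ?thesis using 5 S_C T_C asc_prefix_C by metis
    qed
  qed
  have T0: "T ! 0 = S ! 0" by (cases A) simp_all
  show "is_ascent T" using aS okT T0 unfolding is_ascent_def by (simp add: asc_ascl)
qed


lemma ascent_T_S:
  assumes aT: "is_ascent T" and nm: "\<forall>j<l. T ! (k + Suc (Suc j)) \<noteq> ascl (take (k + Suc (Suc j)) T) + 1"
  shows "is_ascent S"
proof -
  have okT: "1 \<le> i \<Longrightarrow> i < length T \<Longrightarrow> T!i \<le> ascl (take i T) + 1" for i using ascent_le[OF aT] by blast
  have sB: "j < l \<Longrightarrow> B ! j \<le> ascl (take (k + Suc j) S) + 1" for j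
  proof -
    assume j: "j < l"
    have "T ! (k + Suc (Suc j)) \<le> ascl (take (k + Suc (Suc j)) T) + 1" using okT[of "k + Suc (Suc j)"] j by (simp add: less_imp_le)
    then have "T ! (k + Suc (Suc j)) \<le> ascl (take (k + Suc (Suc j)) T)" using nm j by force
    moreover have "take (k + Suc j) S = A @ [u] @ take j B" using j by simp
    moreover have "take (k + Suc (Suc j)) T = A @ [u, v] @ take j B" using j by simp
    moreover have "ascl (A @ [u, v] @ take j B) = ascl (A @ [u] @ take j B) + 1"
      using ascl_ins[OF uv B_take_gt] by simp
    ultimately show ?thesis using T_B[OF j] by simp
  qed
  have hB: "hd B \<le> ascl (A @ [u]) + 1"
    using sB[of 0] l_pos Bne by (simp add: hd_conv_nth)
  have okS: "S!i \<le> ascl (take i S) + 1" if i: "1 \<le> i" "i < length S" for i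
  proof -
    consider "i \<le> k" | j where "j < l" "i = k + Suc j" | "i = k + l + 1" | "i = k + l + 2"
      | j where "i = k + l + 3 + j"
    proof -
      consider (a) "i \<le> k" | (c) "Suc k \<le> i" "i < k + l + 1" | (b) "i = k + l + 1" | (d) "i = k + l + 2"
        | (e) "k + l + 3 \<le> i" by linarith
      then show thesis
      proof cases
        case c then show thesis using that(2)[of "i - Suc k"] by simp
      next
        case e then show thesis using that(5)[of "i - (k + l + 3)"] by simp
      qed (use that in auto)
    qed
    then show ?thesis
    proof cases
      case 1
      have "T ! i = S ! i" using 1 by (cases "i = k") (auto simp: nth_append)
      moreover have "take i T = take i S" using 1 by simp
      ultimately show ?thesis using okT[of i] i by simp
    next
      case 2
      then show ?thesis using sB[of j] S_B[of j] by simp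
    next
      case 3
      have "take i S = A @ [u] @ B" using 3 by simp
      moreover have "ascl (A @ [u]) \<le> ascl (A @ [u] @ B)" using ascl_mono[of "A @ [u]" B] by simp
      moreover have "S ! i = u" using 3 S_u2 by simp
      ultimately show ?thesis using hB hdB uv by simp
    next
      case 4
      have "take i S = (A @ [u]) @ B @ [u]" using 4 by simp
      moreover have "ascl (A @ [u]) \<le> ascl ((A @ [u]) @ B @ [u])" by (rule ascl_mono)
      moreover have "S ! i = v" using 4 S_v by simp
      ultimately show ?thesis using hB hdB by simp
    next
      case 5
      then have "T ! i \<le> ascl (take i T) + 1" using okT[of i] i by simp
      then show ?thesis using 5 S_C T_C asc_prefix_C by metis
    qed
  qed
  have T0: "T ! 0 = S ! 0" by (cases A) simp_all
  show "is_ascent S" using aT okS T0 unfolding is_ascent_def by (simp add: asc_ascl)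
qed


lemma rm_A: "i < k \<Longrightarrow> is_rm T i \<longleftrightarrow> is_rm S i"
proof -
  assume i: "i < k"
  have d1: "drop (Suc i) S = drop (Suc i) A @ [u] @ B @ [u,v] @ C" using i by simp
  have d2: "drop (Suc i) T = drop (Suc i) A @ [u,v] @ B @ [v] @ C" using i by simp
  have "set (drop (Suc i) S) = set (drop (Suc i) T)" unfolding d1 d2 by auto
  moreover have "S!i = T!i" using ST_A i .
  ultimately show ?thesis unfolding is_rm_drop[of T] is_rm_drop[of S] using lenST by simp
qed

lemma rm_C: "k + l + 2 \<le> i \<Longrightarrow> is_rm T i \<longleftrightarrow> is_rm S i"
proof -
  assume i: "k + l + 2 \<le> i"
  have e: "S = (A @ [u] @ B @ [u]) @ v # C" "T = (A @ [u, v] @ B) @ v # C" by simp_all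
  show ?thesis unfolding e
    by (rule is_rm_suffix) (use i in simp_all)
qed

lemma notrm_S_k: "\<not> is_rm S k"
  unfolding is_rm_def using S_u2 by (auto intro!: exI[of _ "k + l + 1"])

lemma notrm_S_B: "k < i \<Longrightarrow> i \<le> k + l \<Longrightarrow> \<not> is_rm S i"
proof -
  assume i: "k < i" "i \<le> k + l"
  define j where "j = i - Suc k"
  have j: "j < l" "i = k + Suc j" using i unfolding j_def by auto
  have "S ! i = B ! j" using S_B j by simp
  moreover have "v < B ! j" using Bgt j by simp
  ultimately have "S ! (k + l + 1) < S ! i" using S_u2 uv by simp
  then show ?thesis unfolding is_rm_def using i by (auto intro!: exI[of _ "k + l + 1"])
qed

lemma notrm_T: "k < i \<Longrightarrow> i \<le> k + l + 1 \<Longrightarrow> \<not> is_rm T i"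
proof -
  assume i: "k < i" "i \<le> k + l + 1"
  have "v \<le> T ! i"
  proof (cases "i = Suc k")
    case True then show ?thesis using T_k1 by simp
  next
    case False
    define j where "j = i - Suc (Suc k)"
    have j: "j < l" "i = k + Suc (Suc j)" using i False unfolding j_def by auto
    then show ?thesis using T_B Bgt by (simp add: less_imp_le)
  qed
  then have "\<not> T ! i < T ! (k + l + 2)" using T_v by simp
  then show ?thesis unfolding is_rm_def using i by (auto intro!: exI[of _ "k + l + 2"])
qed

lemma rm_T_k: "is_rm T k"
proof -
  have "drop (Suc k) T = v # B @ v # C" by simp
  then show ?thesis unfolding is_rm_drop using uv Bgt Cgt by fastforce
qed

lemma rm_S_u2: "is_rm S (k + l + 1)"
proof -
  have "drop (Suc (k + l + 1)) S = v # C" by simp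
  then show ?thesis unfolding is_rm_drop using uv Cgt S_u2 by fastforce
qed

lemma rm_S_v: "is_rm S (k + l + 2)"
proof -
  have "drop (Suc (k + l + 2)) S = C" using drop_len[of "Suc (k + l + 2)" "A @ [u] @ B @ [u, v]" C] by simp
  then show ?thesis unfolding is_rm_drop using Cgt S_v by fastforce
qed

lemma rm_T_iff: "is_rm T i \<longleftrightarrow> (if i = k then True else if i = k + l + 1 then False else is_rm S i)"
proof -
  consider "i < k" | "i = k" | "k < i" "i \<le> k + l" | "i = k + l + 1" | "k + l + 2 \<le> i" by linarith
  then show ?thesis
  proof cases
    case 1 then show ?thesis using rm_A by simp
  next
    case 2 then show ?thesis using rm_T_k by simp
  next
    case 3 then show ?thesis using notrm_T notrm_S_B by simp
  next
    case 4 then show ?thesis using notrm_T[of i] by simp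
  next
    case 5 then show ?thesis using rm_C by simp
  qed
qed

lemma rm_S_range: "is_rm S i \<Longrightarrow> i < k \<or> k + l + 1 \<le> i"
proof (rule ccontr)
  assume a: "is_rm S i" "\<not> (i < k \<or> k + l + 1 \<le> i)"
  show False
  proof (cases "i = k")
    case True then show False using a notrm_S_k by simp
  next
    case False then show False using a notrm_S_B[of i] by simp
  qed
qed

lemma rmin_ne_S: "rmin S \<noteq> length S"
proof -
  have "length (filter (is_rm S) [0..<length S]) < length [0..<length S]"
    by (rule length_filter_less[of k]) (use notrm_S_k in simp_all)
  then show ?thesis unfolding rmin_def Prm_filter by simp
qed

lemma rmin_ne_T: "rmin T \<noteq> length T"
proof -
  have "length (filter (is_rm T) [0..<length T]) < length [0..<length T]"
  proof (rule length_filter_less[of "Suc k"])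
    show "Suc k \<in> set [0..<length T]" using l_pos by (simp; linarith)
    show "\<not> is_rm T (Suc k)" using notrm_T[of "Suc k"] l_pos by simp
  qed
  then show ?thesis unfolding rmin_def Prm_filter by simp
qed

end

locale dec2 = dec +
  fixes r :: nat
  assumes r_lt: "r < rmin S" and Prm_r: "Prm S ! r = k + l + 1"
begin

lemma r_next: "Suc r < rmin S \<and> Prm S ! Suc r = k + l + 2"
proof -
  obtain m where m: "m < rmin S" "Prm S ! m = k + l + 2" using Prm_index[OF rm_S_v] by blast
  have "r < m" using Prm_less_rev[OF r_lt m(1)] Prm_r m(2) by simp
  moreover have "\<not> Suc r < m"
  proof
    assume a: "Suc r < m"
    have "Prm S ! r < Prm S ! Suc r" using Prm_less[of r "Suc r" S] a m by simp
    moreover have "Prm S ! Suc r < Prm S ! m" using Prm_less[of "Suc r" m S] a m by simp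
    ultimately show False using Prm_r m by simp
  qed
  ultimately show ?thesis using m by (metis Suc_lessI)
qed

lemma p_prev: "m < r \<Longrightarrow> Prm S ! m < k"
proof -
  assume m: "m < r"
  have "Prm S ! m < k + l + 1" using Prm_less[of m r S] m r_lt Prm_r by simp
  moreover have "is_rm S (Prm S ! m)" using Prm_nth_rm m r_lt by simp
  ultimately show ?thesis using rm_S_range by fastforce
qed

lemma p_after: "r < m \<Longrightarrow> m < rmin S \<Longrightarrow> k + l + 2 \<le> Prm S ! m"
proof -
  assume m: "r < m" "m < rmin S"
  show ?thesis
  proof (cases "m = Suc r")
    case True then show ?thesis using r_next by simp
  next
    case False
    then have "Prm S ! Suc r < Prm S ! m" using Prm_less[of "Suc r" m S] m by simp
    then show ?thesis using r_next by simp
  qed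
qed

lemma Prm_T: "Prm T = (Prm S)[r := k]"
proof (rule strict_sorted_equal)
  show "sorted_wrt (<) (Prm T)" by (rule Prm_sorted)
  show "sorted_wrt (<) ((Prm S)[r := k])"
    unfolding sorted_wrt_iff_nth_less
  proof (intro allI impI)
    fix i j assume ij: "i < j" "j < length ((Prm S)[r := k])"
    then have j: "j < rmin S" unfolding rmin_def by simp
    show "(Prm S)[r := k] ! i < (Prm S)[r := k] ! j"
    proof (cases "i = r")
      case True
      then show ?thesis using ij p_after[of j] j by (simp add: nth_list_update)
    next
      case False
      note iF = False
      show ?thesis
      proof (cases "j = r")
        case True then show ?thesis using ij p_prev[of i] iF by (simp add: nth_list_update)
      next
        case False then show ?thesis using ij iF Prm_less[of i j S] j by (simp add: nth_list_update)
      qed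
    qed
  qed
  have dist: "distinct (Prm S)" using Prm_sorted strict_sorted_iff by blast
  have "set ((Prm S)[r := k]) = insert k (set (Prm S) - {k + l + 1})"
    using set_update_distinct[OF dist, of r k] r_lt Prm_r unfolding rmin_def by simp
  also have "\<dots> = {i. is_rm T i}"
    unfolding set_Prm using rm_T_iff notrm_S_k by auto
  also have "\<dots> = set (Prm T)" by (simp add: set_Prm)
  finally show "set (Prm T) = set ((Prm S)[r := k])" by simp
qed

lemma rmin_T: "rmin T = rmin S"
  using arg_cong[OF Prm_T, of length] unfolding rmin_def by simp

lemma Prm_T_nth: "m < rmin S \<Longrightarrow> Prm T ! m = (if m = r then k else Prm S ! m)"
  unfolding Prm_T by (simp add: nth_list_update rmin_def)

lemma Rmin_S_r: "Rmin S ! r = u"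
  using Rmin_nth[OF r_lt] Prm_r S_u2 by simp

lemma Rmin_S_r1: "Rmin S ! Suc r = v"
  using Rmin_nth[of "Suc r" S] r_next S_v by simp

lemma Rmin_T: "Rmin T = Rmin S"
proof (rule nth_equalityI)
  show "length (Rmin T) = length (Rmin S)" using length_Rmin[of T] length_Rmin[of S] rmin_T by simp
next
  fix m assume "m < length (Rmin T)"
  then have m: "m < rmin S" using length_Rmin[of T] rmin_T by simp
  show "Rmin T ! m = Rmin S ! m"
  proof (cases "m = r")
    case True
    then show ?thesis using Rmin_nth[of m T] Rmin_S_r Prm_T_nth m T_k rmin_T by simp
  next
    case False
    then have "Prm S ! m < k \<or> k + l + 2 \<le> Prm S ! m"
      using p_prev p_after m by (metis linorder_neqE_nat)
    then have "S ! (Prm S ! m) = T ! (Prm S ! m)" using ST_A ST_C by blast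
    then show ?thesis using Rmin_nth[of m T] Rmin_nth[of m S] Prm_T_nth m False rmin_T by simp
  qed
qed

end



lemma take_len: "n = length X \<Longrightarrow> take n (X @ Y) = X" by simp

lemma rm_below: "j < length s \<Longrightarrow> \<exists>i. j \<le> i \<and> is_rm s i \<and> s!i \<le> s!j"
proof (induction "length s - j" arbitrary: j rule: less_induct)
  case less
  show ?case
  proof (cases "is_rm s j")
    case True then show ?thesis by blast
  next
    case False
    then obtain j' where j': "j < j'" "j' < length s" "\<not> s!j < s!j'" using less.prems unfolding is_rm_def by auto
    have "\<exists>i. j' \<le> i \<and> is_rm s i \<and> s!i \<le> s!j'" by (rule less.hyps) (use j' in auto)
    then obtain i where "j' \<le> i" "is_rm s i" "s!i \<le> s!j'" by blast
    then show ?thesis using j' by (intro exI[of _ i]) auto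
  qed
qed

lemma Rmin0: "is_ascent s \<Longrightarrow> 0 < rmin s \<Longrightarrow> Rmin s ! 0 = 0"
proof -
  assume a: "is_ascent s" "0 < rmin s"
  have s0: "s ! 0 = 0" "0 < length s" using a(1) unfolding is_ascent_def by auto
  obtain i where i: "is_rm s i" "s!i \<le> s!0" using rm_below[OF s0(2)] by blast
  then have si: "s ! i = 0" using s0 by simp
  obtain m where m: "m < rmin s" "Prm s ! m = i" using Prm_index[OF i(1)] by blast
  show ?thesis
  proof (cases "m = 0")
    case True then show ?thesis using Rmin_nth[OF a(2)] m si by simp
  next
    case False
    then have "Prm s ! 0 < i" using Prm_less[of 0 m s] m by simp
    moreover have "is_rm s (Prm s ! 0)" using Prm_nth_rm[OF a(2)] .
    moreover have "i < length s" using i(1) unfolding is_rm_def by simp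
    ultimately have "s ! (Prm s ! 0) < s ! i" unfolding is_rm_def by blast
    then show ?thesis using si by simp
  qed
qed

lemma upt_nth_self: assumes "xs = [0..<length xs]" "i < length xs" shows "xs ! i = i"
proof -
  from arg_cong[OF assms(1), of "\<lambda>x. x ! i"] have "xs ! i = [0..<length xs] ! i" by simp
  then show ?thesis using assms(2) by simp
qed

definition f51 :: "nat list \<Rightarrow> nat list" where
  "f51 s = (let r = rpos s; p = Prm s ! r; p1 = occ_2nd_last s (s ! p) in
     take p1 s @ [s ! p, s ! Suc p] @ drop (Suc p1) (take p s) @ [s ! Suc p] @ drop (Suc (Suc p)) s)"

definition g51 :: "nat list \<Rightarrow> nat list" where
  "g51 t = (let r = rpos t; q = Prm t ! (r - 1); p2 = Prm t ! r in
     take q t @ [t ! q] @ drop (Suc (Suc q)) (take p2 t) @ [t ! q, t ! p2] @ drop (Suc p2) t)"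

context dec2
begin

lemma o1: "2 \<le> occ_after S r u"
proof -
  let ?X = "{j. j < length S \<and> (r = 0 \<or> Prm S ! (r - 1) < j) \<and> S ! j = u}"
  have sub: "{k, k + l + 1} \<subseteq> ?X"
  proof -
    have "r = 0 \<or> Prm S ! (r - 1) < k"
    proof (cases "r = 0")
      case False then show ?thesis using p_prev[of "r - 1"] by simp
    qed simp
    then show ?thesis using S_u2 by auto
  qed
  have fin: "finite ?X" by (rule finite_subset[of _ "{..<length S}"]) auto
  have "card {k, k + l + 1} = 2" by simp
  then show ?thesis unfolding occ_after_def using card_mono[OF fin sub] by simp
qed

lemma S_Cgt: "k + l + 3 \<le> j \<Longrightarrow> j < length S \<Longrightarrow> v < S ! j"
proof -
  assume j: "k + l + 3 \<le> j" "j < length S"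
  define j' where "j' = j - (k + l + 3)"
  have jj: "j = k + l + 3 + j'" "j' < length C" using j unfolding j'_def by auto
  show ?thesis unfolding jj(1) using S_C[of j'] Cgt jj(2) by simp
qed

lemma o2: "occ_after S (Suc r) v < 2"
proof -
  let ?X = "{j. j < length S \<and> (Suc r = 0 \<or> Prm S ! (Suc r - 1) < j) \<and> S ! j = v}"
  have sub: "?X \<subseteq> {k + l + 2}"
  proof
    fix j assume "j \<in> ?X"
    then have j: "j < length S" "k + l + 1 < j" "S ! j = v" using Prm_r by auto
    show "j \<in> {k + l + 2}"
    proof (rule ccontr)
      assume "j \<notin> {k + l + 2}"
      then have "k + l + 3 \<le> j" using j by simp
      then show False using S_Cgt[of j] j by simp
    qed
  qed
  have "card ?X \<le> 1" using card_mono[OF _ sub] by simp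
  then show ?thesis unfolding occ_after_def by simp
qed

lemma o3: "2 \<le> occ_after T (Suc r) v"
proof -
  let ?X = "{j. j < length T \<and> (Suc r = 0 \<or> Prm T ! (Suc r - 1) < j) \<and> T ! j = v}"
  have pr: "Prm T ! r = k" using Prm_T_nth[OF r_lt] by simp
  have sub: "{Suc k, k + l + 2} \<subseteq> ?X" using pr T_k1 T_v by auto
  have fin: "finite ?X" by (rule finite_subset[of _ "{..<length T}"]) auto
  have "card {Suc k, k + l + 2} = 2" by simp
  then show ?thesis unfolding occ_after_def using card_mono[OF fin sub] by simp
qed

lemma o4: "Suc r < m \<Longrightarrow> m < rmin S \<Longrightarrow> occ_after T m (Rmin T ! m) = occ_after S m (Rmin S ! m)"
proof -
  assume m: "Suc r < m" "m < rmin S"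
  have mm: "m - 1 \<noteq> r" "m - 1 < rmin S" using m by auto
  have pe: "Prm T ! (m - 1) = Prm S ! (m - 1)" using Prm_T_nth[of "m - 1"] mm by simp
  have pg: "k + l + 2 \<le> Prm S ! (m - 1)" using p_after[of "m - 1"] m by simp
  have "{j. j < length T \<and> (m = 0 \<or> Prm T ! (m - 1) < j) \<and> T ! j = Rmin T ! m} =
        {j. j < length S \<and> (m = 0 \<or> Prm S ! (m - 1) < j) \<and> S ! j = Rmin S ! m}"
    using pe pg ST_C m Rmin_T by auto
  then show ?thesis unfolding occ_after_def by simp
qed

lemma rpos_iff: "rpos S = r \<longleftrightarrow> rpos T = Suc r"
proof
  assume a: "rpos S = r"
  show "rpos T = Suc r"
  proof (rule rpos_eqI)
    show "rmin T \<noteq> length T" by (rule rmin_ne_T)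
    show "Suc r < rmin T" using r_next rmin_T by simp
    show "2 \<le> occ_after T (Suc r) (Rmin T ! Suc r)" using o3 Rmin_T Rmin_S_r1 by simp
    show "\<forall>m. Suc r < m \<and> m < rmin T \<longrightarrow> occ_after T m (Rmin T ! m) < 2"
      using o4 rpos_max[OF rmin_ne_S] a rmin_T by simp
  qed
next
  assume a: "rpos T = Suc r"
  show "rpos S = r"
  proof (rule rpos_eqI)
    show "rmin S \<noteq> length S" by (rule rmin_ne_S)
    show "r < rmin S" by (rule r_lt)
    show "2 \<le> occ_after S r (Rmin S ! r)" using o1 Rmin_S_r by simp
    show "\<forall>m. r < m \<and> m < rmin S \<longrightarrow> occ_after S m (Rmin S ! m) < 2"
    proof (intro allI impI)
      fix m assume m: "r < m \<and> m < rmin S"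
      show "occ_after S m (Rmin S ! m) < 2"
      proof (cases "m = Suc r")
        case True then show ?thesis using o2 Rmin_S_r1 by simp
      next
        case False
        then have "Suc r < m" using m by simp
        then show ?thesis using o4[of m] rpos_max[OF rmin_ne_T, of m] a m rmin_T by simp
      qed
    qed
  qed
qed

lemma S_Bgt: "k < j \<Longrightarrow> j < k + l + 1 \<Longrightarrow> v < S ! j"
proof -
  assume j: "k < j" "j < k + l + 1"
  define j' where "j' = j - Suc k"
  have jj: "j = k + Suc j'" "j' < l" using j unfolding j'_def by auto
  show ?thesis unfolding jj(1) using S_B[OF jj(2)] Bgt jj(2) by simp
qed

lemma T_Bgt: "Suc k < j \<Longrightarrow> j < k + l + 2 \<Longrightarrow> v < T ! j"
proof -
  assume j: "Suc k < j" "j < k + l + 2"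
  define j' where "j' = j - Suc (Suc k)"
  have jj: "j = k + Suc (Suc j')" "j' < l" using j unfolding j'_def by auto
  show ?thesis unfolding jj(1) using T_B[OF jj(2)] Bgt jj(2) by simp
qed

lemma T_Cgt: "k + l + 3 \<le> j \<Longrightarrow> j < length T \<Longrightarrow> v < T ! j"
  using S_Cgt ST_C by simp

lemma occS: "occ_last S u = k + l + 1" "occ_2nd_last S u = k" "2 \<le> length (occs S u)"
proof -
  have c: "\<forall>x. k < x \<and> x < k + l + 1 \<longrightarrow> S ! x \<noteq> u" using S_Bgt uv by fastforce
  have d: "\<forall>x. k + l + 1 < x \<and> x < length S \<longrightarrow> S ! x \<noteq> u"
  proof (intro allI impI)
    fix x assume x: "k + l + 1 < x \<and> x < length S"
    show "S ! x \<noteq> u"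
    proof (cases "x = k + l + 2")
      case True then show ?thesis using S_v uv by simp
    next
      case False then show ?thesis using S_Cgt[of x] x uv by simp
    qed
  qed
  note h = occs_two_conseq[of k "k + l + 1" S u, OF _ _ S_k S_u2 c d]
  show "occ_last S u = k + l + 1" "occ_2nd_last S u = k" "2 \<le> length (occs S u)"
    using h l_pos by simp_all
qed

lemma sebr_S: "rpos S = r \<Longrightarrow> sebr S \<noteq> 0 \<and> v < sebr S"
proof -
  assume a: "rpos S = r"
  let ?M = "{S ! j |j. k < j \<and> j < k + l + 1}"
  have e: "sebr S = Min ?M"
    unfolding sebr_def Let_def a Rmin_S_r occS using occS(3) l_pos by simp
  have fin: "finite ?M"
  proof -
    have "?M = (\<lambda>j. S ! j) ` {k<..<k + l + 1}" by auto
    then show ?thesis by simp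
  qed
  have ne: "?M \<noteq> {}" using l_pos by auto
  have "v < Min ?M" using Min_gr_iff[OF fin ne] S_Bgt by auto
  then show ?thesis using e by simp
qed

lemma card_rm_S: "rmin S + 2 \<le> length S"
proof -
  have "rmin S = card {i. is_rm S i}"
  proof -
    have "distinct (Prm S)" using Prm_sorted strict_sorted_iff by blast
    then show ?thesis unfolding rmin_def using distinct_card set_Prm by metis
  qed
  moreover have "{i. is_rm S i} \<subseteq> {..<length S} - {k, Suc k}"
    using notrm_S_k notrm_S_B[of "Suc k"] l_pos by (auto simp: is_rm_def)
  moreover have "card ({..<length S} - {k, Suc k}) = length S - 2"
    using l_pos by (simp add: card_Diff_subset)
  ultimately have "rmin S \<le> length S - 2" using card_mono[of "{..<length S} - {k, Suc k}"] by simp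
  moreover have "2 \<le> length S" by simp
  ultimately show ?thesis by simp
qed

lemma S_in_T51: "is_ascent S \<Longrightarrow> rpos S = r \<Longrightarrow> S \<in> T51"
proof -
  assume asc: "is_ascent S" and a: "rpos S = r"
  have ne: "S \<noteq> [0..<length S]"
  proof
    assume e: "S = [0..<length S]"
    have "S ! k = k" by (rule upt_nth_self[OF e]) simp
    moreover have "S ! (k + l + 1) = k + l + 1" by (rule upt_nth_self[OF e]) simp
    ultimately show False using S_k S_u2 by simp
  qed
  show ?thesis unfolding T51_def ascAstar_def
    using asc ne card_rm_S sebr_S[OF a] a r_next Rmin_S_r1 Prm_r by simp
qed

lemma occT: "occ_last T u = k" "occ_2nd_last T v = Suc k" "occ_last T v = k + l + 2"
proof -
  have "\<forall>x. k < x \<and> x < length T \<longrightarrow> T ! x \<noteq> u"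
  proof (intro allI impI)
    fix x assume x: "k < x \<and> x < length T"
    consider "x = Suc k" | "Suc k < x" "x < k + l + 2" | "x = k + l + 2" | "k + l + 3 \<le> x" using x by linarith
    then show "T ! x \<noteq> u"
      by cases (use T_k1 T_Bgt T_v T_Cgt x uv in fastforce)+
  qed
  then show "occ_last T u = k" using occs_one[of k T u] T_k by simp
  have c: "\<forall>x. Suc k < x \<and> x < k + l + 2 \<longrightarrow> T ! x \<noteq> v" using T_Bgt by fastforce
  have d: "\<forall>x. k + l + 2 < x \<and> x < length T \<longrightarrow> T ! x \<noteq> v"
  proof (intro allI impI)
    fix x assume x: "k + l + 2 < x \<and> x < length T"
    then have "k + l + 3 \<le> x" by simp
    then show "T ! x \<noteq> v" using T_Cgt[of x] x by simp
  qed
  note h = occs_two_conseq[of "Suc k" "k + l + 2" T v, OF _ _ T_k1 T_v c d]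
  show "occ_2nd_last T v = Suc k" "occ_last T v = k + l + 2" using h l_pos by simp_all
qed

lemma T_in_target: "is_ascent S \<Longrightarrow> rpos S = r \<Longrightarrow> T \<in> target51 (length T)"
proof -
  assume asc: "is_ascent S" and a: "rpos S = r"
  have rT: "rpos T = Suc r" using rpos_iff a by simp
  have aT: "is_ascent T" using ascent_S_T(1)[OF asc] .
  have nm: "\<not> (\<exists>j. Suc k < j \<and> j < k + l + 2 \<and> Masc T j)"
  proof
    assume "\<exists>j. Suc k < j \<and> j < k + l + 2 \<and> Masc T j"
    then obtain j where j: "Suc k < j" "j < k + l + 2" "Masc T j" by blast
    define j' where "j' = j - Suc (Suc k)"
    have jj: "j' < l" "j = k + Suc (Suc j')" using j unfolding j'_def by auto
    show False using ascent_S_T(2)[OF asc] j(3) jj unfolding Masc_def asc_ascl by auto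
  qed
  have r1: "Rmin T ! r = u" using Rmin_T Rmin_S_r by simp
  have r2: "Rmin T ! Suc r = v" using Rmin_T Rmin_S_r1 by simp
  show ?thesis unfolding target51_def ascA_def Let_def
    using aT rT nm l_pos r1 r2 occT by simp
qed

lemma f_S: "rpos S = r \<Longrightarrow> f51 S = T"
proof -
  assume a: "rpos S = r"
  have 1: "S ! Suc (k + l + 1) = v" using S_v by simp
  have 2: "take (k + l + 1) S = A @ [u] @ B" using take_len[of "k + l + 1" "A @ [u] @ B" "[u, v] @ C"] by simp
  have 3: "drop (Suc k) (A @ [u] @ B) = B" using drop_len[of "Suc k" "A @ [u]" B] by simp
  have 4: "drop (Suc (Suc (k + l + 1))) S = C" using drop_len[of _ "A @ [u] @ B @ [u, v]" C] by simp
  show ?thesis unfolding f51_def Let_def a Prm_r S_u2 occS 1 2 3 4 by simp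
qed

lemma g_T: "rpos T = Suc r \<Longrightarrow> g51 T = S"
proof -
  assume a: "rpos T = Suc r"
  have q: "Prm T ! (Suc r - 1) = k" using Prm_T_nth[OF r_lt] by simp
  have p2: "Prm T ! Suc r = k + l + 2" using Prm_T_nth[of "Suc r"] r_next by simp
  have 2: "take (k + l + 2) T = A @ [u, v] @ B" using take_len[of "k + l + 2" "A @ [u, v] @ B" "[v] @ C"] by simp
  have 3: "drop (Suc (Suc k)) (A @ [u, v] @ B) = B" using drop_len[of "Suc (Suc k)" "A @ [u, v]" B] by simp
  have 4: "drop (Suc (k + l + 2)) T = C" using drop_len[of _ "A @ [u, v] @ B @ [v]" C] by simp
  show ?thesis unfolding g51_def Let_def a q p2 T_k T_v 2 3 4 by simp
qed

lemma stats:
  assumes aS: "is_ascent S"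
  shows "asc T = asc S" "rep T = rep S" "maxst T = maxst S" "ealm T = ealm S" "rmin T = rmin S"
    "zero S = zero T + (if u = 0 then 1 else 0)"
proof -
  have aT: "is_ascent T" using ascent_S_T(1)[OF aS] .
  show "asc T = asc S" using asc_ST by (simp add: asc_ascl)
  have "set T = set S" by auto
  then show "rep T = rep S" unfolding rep_def by simp
  show "rmin T = rmin S" by (rule rmin_T)
  have zz: "zero xs = length (filter (\<lambda>x. x = 0) xs)" for xs
    unfolding zero_def length_filter_conv_card by simp
  show "zero S = zero T + (if u = 0 then 1 else 0)" unfolding zz using uv by simp
  have uk: "u \<noteq> k"
  proof
    assume uk: "u = k"
    have "S ! Suc k \<le> ascl (take (Suc k) S) + 1" using ascent_le[OF aS, of "Suc k"] l_pos by simp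
    moreover have "take (Suc k) S = A @ [u]" by simp
    moreover have "ascl (A @ [u]) \<le> k" using ascl_le[of "A @ [u]"] by simp
    moreover have "S ! Suc k = hd B" using Bne by (cases B) (simp_all add: nth_append)
    ultimately show False using hdB uv uk by simp
  qed
  have s1: "{j. j < length S \<and> S ! j = j} \<subseteq> {..<k}" using maxst_le[OF aS, of k] uk S_k by simp
  have s2: "{j. j < length T \<and> T ! j = j} \<subseteq> {..<k}" using maxst_le[OF aT, of k] uk T_k by simp
  have eqset: "{j. j < length T \<and> T ! j = j} = {j. j < length S \<and> S ! j = j}"
    using s1 s2 ST_A by auto
  then show mx: "maxst T = maxst S" unfolding maxst_def by simp
  have "maxst S \<le> k" unfolding maxst_def using card_mono[OF _ s1] by simp
  then have "maxst S < length S" "S ! maxst S = T ! maxst S"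
    using ST_A[of "maxst S"] S_k T_k by (auto simp: le_less)
  then show "ealm T = ealm S" unfolding ealm_def mx by simp
qed

lemma u_zero: "is_ascent S \<Longrightarrow> (u = 0 \<longleftrightarrow> r = 0)"
  using Rmin0[of S] Rmin_S_r Rmin_less[of 0 r S] r_lt by (cases "r = 0") auto

end



context dec
begin
lemma T_to_S: "is_ascent T \<Longrightarrow> \<not> (\<exists>j. Suc k < j \<and> j < k + l + 2 \<and> Masc T j) \<Longrightarrow> is_ascent S"
proof -
  assume aT: "is_ascent T" and nm: "\<not> (\<exists>j. Suc k < j \<and> j < k + l + 2 \<and> Masc T j)"
  have "\<forall>j<l. T ! (k + Suc (Suc j)) \<noteq> ascl (take (k + Suc (Suc j)) T) + 1"
  proof (intro allI impI)
    fix j assume j: "j < l"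
    have "\<not> Masc T (k + Suc (Suc j))" using nm j by simp
    then show "T ! (k + Suc (Suc j)) \<noteq> ascl (take (k + Suc (Suc j)) T) + 1"
      unfolding Masc_def asc_ascl by simp
  qed
  then show ?thesis using ascent_T_S[OF aT] by simp
qed
end

lemma in_set_drop_take: "x \<in> set (drop i (take j s)) \<Longrightarrow> \<exists>m. i \<le> m \<and> m < j \<and> m < length s \<and> x = s ! m"
proof -
  assume "x \<in> set (drop i (take j s))"
  then obtain t where t: "t < length (drop i (take j s))" "x = drop i (take j s) ! t" by (auto simp: in_set_conv_nth)
  have h: "i + t < min (length s) j" using t(1) by (auto simp: min_def)
  have "x = s ! (i + t)" using t h by simp
  then show ?thesis using h by (intro exI[of _ "i + t"]) auto
qed

lemma in_set_drop': "x \<in> set (drop i s) \<Longrightarrow> \<exists>m. i \<le> m \<and> m < length s \<and> x = s ! m"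
  using in_set_drop_take[of x i "length s" s] by auto

lemma split5:
  assumes "i < j" "Suc j < length s"
  shows "s = take i s @ [s!i] @ drop (Suc i) (take j s) @ [s!j, s!Suc j] @ drop (Suc (Suc j)) s"
proof -
  have 1: "drop (Suc i) s = drop (Suc i) (take j s) @ drop j s"
  proof -
    have "drop (Suc i) s = take (j - Suc i) (drop (Suc i) s) @ drop (j - Suc i) (drop (Suc i) s)"
      by (rule append_take_drop_id[symmetric])
    also have "take (j - Suc i) (drop (Suc i) s) = drop (Suc i) (take j s)"
      using assms by (simp add: take_drop)
    also have "drop (j - Suc i) (drop (Suc i) s) = drop j s" using assms by simp
    finally show ?thesis .
  qed
  have 2: "drop j s = s!j # s!Suc j # drop (Suc (Suc j)) s" using assms by (simp add: Cons_nth_drop_Suc)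
  have "s = take i s @ s!i # drop (Suc i) s" using assms by (simp add: id_take_nth_drop)
  also have "\<dots> = take i s @ [s!i] @ drop (Suc i) (take j s) @ [s!j, s!Suc j] @ drop (Suc (Suc j)) s"
    using 1 2 by simp
  finally show ?thesis .
qed

lemma split4:
  assumes "Suc i < j" "j < length s"
  shows "s = take i s @ [s!i, s!Suc i] @ drop (Suc (Suc i)) (take j s) @ [s!j] @ drop (Suc j) s"
proof -
  have 1: "drop (Suc (Suc i)) s = drop (Suc (Suc i)) (take j s) @ drop j s"
  proof -
    have "drop (Suc (Suc i)) s = take (j - Suc (Suc i)) (drop (Suc (Suc i)) s) @ drop (j - Suc (Suc i)) (drop (Suc (Suc i)) s)"
      by (rule append_take_drop_id[symmetric])
    also have "take (j - Suc (Suc i)) (drop (Suc (Suc i)) s) = drop (Suc (Suc i)) (take j s)"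
    proof -
      have e: "j - Suc (Suc i) + Suc (Suc i) = j" using assms by simp
      show ?thesis by (simp only: take_drop e)
    qed
    also have "drop (j - Suc (Suc i)) (drop (Suc (Suc i)) s) = drop j s"
    proof -
      have e: "j - Suc (Suc i) + Suc (Suc i) = j" using assms by simp
      show ?thesis by (simp only: drop_drop e)
    qed
    finally show ?thesis .
  qed
  have 2: "drop j s = s!j # drop (Suc j) s" using assms by (simp add: Cons_nth_drop_Suc)
  have 3: "drop i s = s!i # s!Suc i # drop (Suc (Suc i)) s" using assms by (simp add: Cons_nth_drop_Suc)
  have "s = take i s @ drop i s" by simp
  also have "\<dots> = take i s @ [s!i, s!Suc i] @ drop (Suc (Suc i)) (take j s) @ [s!j] @ drop (Suc j) s"
    using 1 2 3 by simp
  finally show ?thesis .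
qed

lemma occs_facts:
  assumes "2 \<le> length (occs s a)"
  shows "occ_2nd_last s a < occ_last s a" "occ_last s a < length s" "s ! occ_last s a = a"
    "s ! occ_2nd_last s a = a" "\<And>x. x < length s \<Longrightarrow> s ! x = a \<Longrightarrow> x \<le> occ_last s a"
proof -
  let ?o = "occs s a"
  have so: "sorted_wrt (<) ?o" unfolding occs_def by (simp add: sorted_wrt_filter)
  have mem: "x \<in> set ?o \<longleftrightarrow> x < length s \<and> s ! x = a" for x unfolding occs_def by auto
  have ne: "?o \<noteq> []" using assms by auto
  have last: "occ_last s a = ?o ! (length ?o - 1)" unfolding occ_last_def using ne by (simp add: last_conv_nth)
  have l2: "occ_2nd_last s a = ?o ! (length ?o - 2)" unfolding occ_2nd_last_def by simp
  show "occ_2nd_last s a < occ_last s a" unfolding last l2 using sorted_wrt_nth_less[OF so, of "length ?o - 2" "length ?o - 1"] assms by simp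
  have i1: "?o ! (length ?o - 1) \<in> set ?o" using ne by simp
  have i2: "?o ! (length ?o - 2) \<in> set ?o" using assms by simp
  show "occ_last s a < length s" "s ! occ_last s a = a" using i1 mem last by auto
  show "s ! occ_2nd_last s a = a" using i2 mem l2 by auto
  fix x assume x: "x < length s" "s ! x = a"
  then have "x \<in> set ?o" using mem by simp
  then obtain i where i: "i < length ?o" "?o ! i = x" by (auto simp: in_set_conv_nth)
  show "x \<le> occ_last s a"
  proof (cases "i = length ?o - 1")
    case True then show ?thesis using i last by simp
  next
    case False
    then have "i < length ?o - 1" using i by simp
    then have "?o ! i < ?o ! (length ?o - 1)" using sorted_wrt_nth_less[OF so, of i "length ?o - 1"] i by simp
    then show ?thesis using i last by simp
  qed
qed

lemma fwd:
  assumes sT: "s \<in> T51" and sA: "s \<in> ascA n"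
  shows "\<exists>A u v B C. dec2 A u v B C (rpos s) \<and> s = A @ [u] @ B @ [u, v] @ C"
proof -
  define r where "r = rpos s"
  define p where "p = Prm s ! r"
  have asc: "is_ascent s" using sA unfolding ascA_def by simp
  have r1: "Suc r < rmin s" and sb0: "sebr s \<noteq> 0" and sb: "Rmin s ! Suc r < sebr s"
    and pp: "Prm s ! Suc r = Suc p"
    using sT unfolding T51_def r_def p_def by auto
  have r0: "r < rmin s" using r1 by simp
  have rmp: "is_rm s p" using Prm_nth_rm[OF r0] p_def by simp
  have rmp1: "is_rm s (Suc p)" using Prm_nth_rm[OF r1] pp by simp
  have p1n: "Suc p < length s" using rmp1 unfolding is_rm_def by simp
  define a where "a = Rmin s ! r"
  define b where "b = Rmin s ! Suc r"
  have sa: "s ! p = a" unfolding a_def p_def using Rmin_nth[OF r0] by simp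
  have sbb: "s ! Suc p = b" unfolding b_def using Rmin_nth[OF r1] pp by simp
  have ab: "a < b" unfolding a_def b_def using Rmin_less[OF _ r1] by simp
  have sebr_eq: "sebr s = (if length (occs s a) < 2 \<or> occ_last s a = Suc (occ_2nd_last s a) then 0
      else Min {s ! j |j. occ_2nd_last s a < j \<and> j < occ_last s a})"
    unfolding sebr_def Let_def a_def r_def by simp
  have len2: "2 \<le> length (occs s a)" and nadj: "occ_last s a \<noteq> Suc (occ_2nd_last s a)"
    and sebrM: "sebr s = Min {s ! j |j. occ_2nd_last s a < j \<and> j < occ_last s a}"
    using sb0 sebr_eq by (auto split: if_splits)
  define p1 where "p1 = occ_2nd_last s a"
  note of = occs_facts[OF len2]
  have pl: "occ_last s a = p"
  proof -
    have "p \<le> occ_last s a" using of(5)[of p] p1n sa by simp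
    moreover have "\<not> p < occ_last s a"
    proof
      assume "p < occ_last s a"
      then have "s ! p < s ! occ_last s a" using rmp of(2) unfolding is_rm_def by blast
      then show False using of(3) sa by simp
    qed
    ultimately show ?thesis by simp
  qed
  have p1p: "p1 < p" using of(1) pl p1_def by simp
  have sp1: "s ! p1 = a" using of(4) p1_def by simp
  have nadj': "p \<noteq> Suc p1" using nadj pl p1_def by simp
  let ?M = "{s ! j |j. p1 < j \<and> j < p}"
  have finM: "finite ?M"
  proof -
    have "?M = (\<lambda>j. s ! j) ` {p1<..<p}" by auto
    then show ?thesis by simp
  qed
  have reg: "b < s ! j" if j: "p1 < j" "j < p" for j
  proof -
    have "s ! j \<in> ?M" using j by auto
    then have "Min ?M \<le> s ! j" using finM by simp
    moreover have "b < Min ?M" using sb sebrM pl p1_def b_def by simp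
    ultimately show ?thesis by simp
  qed
  define A where "A = take p1 s"
  define B where "B = drop (Suc p1) (take p s)"
  define C where "C = drop (Suc (Suc p)) s"
  have seq: "s = A @ [a] @ B @ [a, b] @ C"
    using split5[OF p1p p1n] unfolding sp1 sa sbb A_def B_def C_def .
  have lA: "length A = p1" unfolding A_def using p1p p1n by simp
  have lB: "length B = p - Suc p1" unfolding B_def using p1p p1n by simp
  have d: "dec a b B C"
  proof
    show "a < b" by (rule ab)
    show "B \<noteq> []" using lB p1p nadj' by auto
    show "\<forall>x\<in>set B. b < x"
    proof
      fix x assume "x \<in> set B"
      then have "x \<in> set (drop (Suc p1) (take p s))" unfolding B_def .
      from in_set_drop_take[OF this] obtain m where "Suc p1 \<le> m" "m < p" "x = s ! m" by blast
      then show "b < x" using reg by simp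
    qed
    show "\<forall>x\<in>set C. b < x"
    proof
      fix x assume "x \<in> set C"
      then have "x \<in> set (drop (Suc (Suc p)) s)" unfolding C_def .
      from in_set_drop'[OF this] obtain m where "Suc (Suc p) \<le> m" "m < length s" "x = s ! m" by blast
      then show "b < x" using rmp1 sbb unfolding is_rm_def by auto
    qed
  qed
  have "dec2 A a b B C r"
  proof (rule dec2.intro[OF d])
    have "r < rmin (A @ [a] @ B @ [a, b] @ C)" using r0 seq by simp
    moreover have "Prm (A @ [a] @ B @ [a, b] @ C) ! r = length A + length B + 1"
      using seq p_def lA lB p1p by simp
    ultimately show "dec2_axioms A a b B C r" unfolding dec2_axioms_def by blast
  qed
  then show ?thesis using seq r_def by blast
qed




lemma bwd:
  assumes tT: "t \<in> target51 n"
  shows "\<exists>A u v B C r. dec2 A u v B C r \<and> t = A @ [u, v] @ B @ [v] @ C \<and> rpos t = Suc r \<and>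
     is_ascent t \<and> length t = n \<and>
     \<not> (\<exists>j. Suc (length A) < j \<and> j < length A + length B + 2 \<and> Masc t j)"
proof -
  have tA: "is_ascent t" "length t = n" and rp0: "rpos t \<noteq> 0"
    using tT unfolding target51_def ascA_def by auto
  define r where "r = rpos t - 1"
  have rr: "rpos t = Suc r" using rp0 r_def by simp
  note rp = rpos_pos[OF rp0]
  have r1: "Suc r < rmin t" using rp rr by simp
  have r0: "r < rmin t" using r1 by simp
  define Q where "Q = Prm t ! r"
  define P2 where "P2 = Prm t ! Suc r"
  have QP: "Q < P2" unfolding Q_def P2_def using Prm_less[OF _ r1] by simp
  have rmQ: "is_rm t Q" unfolding Q_def using Prm_nth_rm[OF r0] .
  have rmP: "is_rm t P2" unfolding P2_def using Prm_nth_rm[OF r1] .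
  have P2n: "P2 < length t" using rmP unfolding is_rm_def by simp
  define u where "u = t ! Q"
  define v where "v = t ! P2"
  have Ru: "Rmin t ! r = u" unfolding u_def Q_def using Rmin_nth[OF r0] .
  have Rv: "Rmin t ! Suc r = v" unfolding v_def P2_def using Rmin_nth[OF r1] .
  have uv: "u < v" using Rmin_less[OF _ r1, of r] Ru Rv by simp
  have Pafter: "v < t ! j" if "P2 < j" "j < length t" for j using rmP that unfolding is_rm_def v_def by blast
  have Qafter: "u < t ! j" if "Q < j" "j < length t" for j using rmQ that unfolding is_rm_def u_def by blast
  let ?X = "{j. j < length t \<and> (Suc r = 0 \<or> Prm t ! (Suc r - 1) < j) \<and> t ! j = v}"
  have c2: "2 \<le> card ?X" using rp rr Rv unfolding occ_after_def by simp
  have "\<exists>j\<in>?X. j \<noteq> P2"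
  proof (rule ccontr)
    assume "\<not> ?thesis"
    then have "?X \<subseteq> {P2}" by auto
    then have "card ?X \<le> 1" using card_mono[of "{P2}" ?X] by simp
    then show False using c2 by simp
  qed
  then obtain j1 where j1: "j1 < length t" "Q < j1" "t ! j1 = v" "j1 \<noteq> P2" unfolding Q_def by auto
  have j1P: "j1 < P2"
  proof (rule ccontr)
    assume "\<not> j1 < P2"
    then have "P2 < j1" using j1 by simp
    then show False using Pafter[of j1] j1 by simp
  qed
  define J where "J = {j. Q < j \<and> j < P2 \<and> t ! j = v}"
  have finJ: "finite J" unfolding J_def by (rule finite_subset[of _ "{..<P2}"]) auto
  have j1J: "j1 \<in> J" unfolding J_def using j1 j1P by simp
  define j0 where "j0 = Max J"
  have j0J: "j0 \<in> J" unfolding j0_def using finJ j1J by (intro Max_in) auto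
  have j0max: "j \<in> J \<Longrightarrow> j \<le> j0" for j unfolding j0_def using finJ by simp
  have j0: "Q < j0" "j0 < P2" "t ! j0 = v" using j0J unfolding J_def by auto
  have btw: "\<forall>x. j0 < x \<and> x < P2 \<longrightarrow> t ! x \<noteq> v"
  proof (intro allI impI)
    fix x assume x: "j0 < x \<and> x < P2"
    show "t ! x \<noteq> v"
    proof
      assume "t ! x = v"
      then have "x \<in> J" using x j0 unfolding J_def by simp
      then have "x \<le> j0" by (rule j0max)
      then show False using x by simp
    qed
  qed
  have aft: "\<forall>x. P2 < x \<and> x < length t \<longrightarrow> t ! x \<noteq> v" using Pafter by fastforce
  note oc = occs_two_conseq[of j0 P2 t v, OF j0(2) P2n j0(3) _ btw aft]
  have oc2: "occ_2nd_last t v = j0" "occ_last t v = P2" using oc v_def by simp_all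
  have ocu: "occ_last t u = Q"
    using occs_one[of Q t u] Qafter rmQ u_def unfolding is_rm_def by fastforce
  have tc: "(Q = Suc j0 \<or> j0 = Suc Q) \<and> P2 \<noteq> Suc j0 \<and> \<not> (\<exists>j. j0 < j \<and> j < P2 \<and> Masc t j)"
    using tT rr Ru Rv oc2 ocu unfolding target51_def Let_def by simp
  have j0Q: "j0 = Suc Q" using tc j0 by auto
  have P2Q: "Suc (Suc Q) < P2" using tc j0Q j0 by auto
  have reg: "v < t ! j" if j: "Suc Q < j" "j < P2" for j
  proof -
    have "t ! j \<noteq> v" using btw j j0Q by simp
    moreover have "\<not> t ! j < v"
    proof
      assume lt: "t ! j < v"
      obtain i where i: "j \<le> i" "is_rm t i" "t ! i \<le> t ! j" using rm_below[of j t] j P2n by auto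
      have iP: "i < P2"
      proof (rule ccontr)
        assume "\<not> i < P2"
        then consider "i = P2" | "P2 < i" by linarith
        then show False
        proof cases
          case 1 then show False using i lt v_def by simp
        next
          case 2 then show False using Pafter[of i] i lt unfolding is_rm_def by simp
        qed
      qed
      obtain m where m: "m < rmin t" "Prm t ! m = i" using Prm_index[OF i(2)] by blast
      have "r < m" using Prm_less_rev[OF r0 m(1)] m(2) i j Q_def by simp
      moreover have "m < Suc r" using Prm_less_rev[OF m(1) r1] m(2) iP P2_def by simp
      ultimately show False by simp
    qed
    ultimately show ?thesis by simp
  qed
  have tv1: "t ! Suc Q = v" using j0 j0Q by simp
  define A where "A = take Q t"
  define B where "B = drop (Suc (Suc Q)) (take P2 t)"
  define C where "C = drop (Suc P2) t"
  have P2Q': "Suc Q < P2" using P2Q by simp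
  have teq: "t = A @ [u, v] @ B @ [v] @ C"
    using split4[OF P2Q' P2n] unfolding tv1 A_def B_def C_def u_def[symmetric] v_def[symmetric] .
  have lA: "length A = Q" unfolding A_def using QP P2n by simp
  have lB: "length B = P2 - Suc (Suc Q)" unfolding B_def using P2Q P2n by simp
  have d: "dec u v B C"
  proof
    show "u < v" by (rule uv)
    show "B \<noteq> []" using lB P2Q by auto
    show "\<forall>x\<in>set B. v < x"
    proof
      fix x assume "x \<in> set B"
      then have "x \<in> set (drop (Suc (Suc Q)) (take P2 t))" unfolding B_def .
      from in_set_drop_take[OF this] obtain m where "Suc (Suc Q) \<le> m" "m < P2" "x = t ! m" by blast
      then show "v < x" using reg by simp
    qed
    show "\<forall>x\<in>set C. v < x"
    proof
      fix x assume "x \<in> set C"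
      then have "x \<in> set (drop (Suc P2) t)" unfolding C_def .
      from in_set_drop'[OF this] obtain m where "Suc P2 \<le> m" "m < length t" "x = t ! m" by blast
      then show "v < x" using Pafter by simp
    qed
  qed
  obtain r0' where r0': "r0' < rmin (A @ [u] @ B @ [u, v] @ C)"
    "Prm (A @ [u] @ B @ [u, v] @ C) ! r0' = length A + length B + 1"
    using Prm_index[OF dec.rm_S_u2[OF d, of A]] by blast
  have d2: "dec2 A u v B C r0'"
    by (rule dec2.intro[OF d]) (unfold dec2_axioms_def, use r0' in blast)
  have "Prm (A @ [u, v] @ B @ [v] @ C) ! r0' = length A"
    using dec2.Prm_T_nth[OF d2 r0'(1)] by simp
  then have pt: "Prm t ! r0' = Q" using teq lA by simp
  have r0'lt: "r0' < rmin t" using dec2.rmin_T[OF d2] r0'(1) teq by simp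
  have "r0' = r"
  proof (rule ccontr)
    assume "r0' \<noteq> r"
    then consider "r0' < r" | "r < r0'" by linarith
    then show False
    proof cases
      case 1 then show False using Prm_less[OF 1 r0] pt Q_def by simp
    next
      case 2 then show False using Prm_less[OF 2 r0'lt] pt Q_def by simp
    qed
  qed
  have nm: "\<not> (\<exists>j. Suc (length A) < j \<and> j < length A + length B + 2 \<and> Masc t j)"
    using tc j0Q lA lB P2Q by auto
  show ?thesis using d2 teq rr tA nm \<open>r0' = r\<close> by blast
qed

theorem mainTheorem13:
  fixes n :: nat
  shows "\<exists>f. bij_betw f (T51 \<inter> ascA n) (target51 n) \<and>
    (\<forall>s \<in> T51 \<inter> ascA n.
       asc (f s) = asc s \<and> rep (f s) = rep s \<and> maxst (f s) = maxst s \<and>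
       ealm (f s) = ealm s \<and> rmin (f s) = rmin s \<and>
       rpos s = rpos (f s) - 1 \<and>
       zero s = zero (f s) + (if rpos s = 0 then 1 else 0))"
proof (intro exI conjI)
  have F: "f51 s \<in> target51 n \<and> g51 (f51 s) = s \<and>
       asc (f51 s) = asc s \<and> rep (f51 s) = rep s \<and> maxst (f51 s) = maxst s \<and>
       ealm (f51 s) = ealm s \<and> rmin (f51 s) = rmin s \<and>
       rpos s = rpos (f51 s) - 1 \<and>
       zero s = zero (f51 s) + (if rpos s = 0 then 1 else 0)" if s: "s \<in> T51 \<inter> ascA n" for s
  proof -
    obtain A u v B C where d2: "dec2 A u v B C (rpos s)" and seq: "s = A @ [u] @ B @ [u, v] @ C"
      using fwd[of s n] s by blast
    have aS: "is_ascent (A @ [u] @ B @ [u, v] @ C)" "length (A @ [u] @ B @ [u, v] @ C) = n"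
      using s seq unfolding ascA_def by auto
    have rS: "rpos (A @ [u] @ B @ [u, v] @ C) = rpos s" using seq by simp
    have rT: "rpos (A @ [u, v] @ B @ [v] @ C) = Suc (rpos s)" using dec2.rpos_iff[OF d2] rS by simp
    have fS: "f51 s = A @ [u, v] @ B @ [v] @ C" using dec2.f_S[OF d2 rS] seq by simp
    have gT: "g51 (A @ [u, v] @ B @ [v] @ C) = s" using dec2.g_T[OF d2 rT] seq by simp
    have tin: "A @ [u, v] @ B @ [v] @ C \<in> target51 n"
      using dec2.T_in_target[OF d2 aS(1) rS] aS(2) by simp
    note st = dec2.stats[OF d2 aS(1)]
    have uz: "u = 0 \<longleftrightarrow> rpos s = 0" using dec2.u_zero[OF d2 aS(1)] .
    show ?thesis unfolding fS using tin gT st uz rT seq by simp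
  qed
  have G: "g51 t \<in> T51 \<inter> ascA n \<and> f51 (g51 t) = t" if t: "t \<in> target51 n" for t
  proof -
    obtain A u v B C r where d2: "dec2 A u v B C r" and teq: "t = A @ [u, v] @ B @ [v] @ C"
      and rt: "rpos t = Suc r" and at: "is_ascent t" "length t = n"
      and nm: "\<not> (\<exists>j. Suc (length A) < j \<and> j < length A + length B + 2 \<and> Masc t j)"
      using bwd[OF t] by blast
    have rT: "rpos (A @ [u, v] @ B @ [v] @ C) = Suc r" using rt teq by simp
    have rS: "rpos (A @ [u] @ B @ [u, v] @ C) = r" using dec2.rpos_iff[OF d2] rT by simp
    have aS: "is_ascent (A @ [u] @ B @ [u, v] @ C)"
      using dec.T_to_S[OF dec2.axioms(1)[OF d2], of A] at nm teq by simp
    have gT: "g51 t = A @ [u] @ B @ [u, v] @ C" using dec2.g_T[OF d2 rT] teq by simp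
    have fS: "f51 (A @ [u] @ B @ [u, v] @ C) = t" using dec2.f_S[OF d2 rS] teq by simp
    have inT: "A @ [u] @ B @ [u, v] @ C \<in> T51" using dec2.S_in_T51[OF d2 aS rS] .
    have "length (A @ [u] @ B @ [u, v] @ C) = n" using at teq by simp
    then show ?thesis unfolding gT using inT aS fS unfolding ascA_def by simp
  qed
  show "bij_betw f51 (T51 \<inter> ascA n) (target51 n)"
  proof (rule bij_betw_byWitness[where f'=g51])
    show "\<forall>a\<in>T51 \<inter> ascA n. g51 (f51 a) = a" using F by blast
    show "\<forall>a'\<in>target51 n. f51 (g51 a') = a'" using G by blast
    show "f51 ` (T51 \<inter> ascA n) \<subseteq> target51 n" using F by blast
    show "g51 ` target51 n \<subseteq> T51 \<inter> ascA n" using G by blast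
  qed
  show "\<forall>s\<in>T51 \<inter> ascA n. asc (f51 s) = asc s \<and> rep (f51 s) = rep s \<and> maxst (f51 s) = maxst s \<and>
       ealm (f51 s) = ealm s \<and> rmin (f51 s) = rmin s \<and> rpos s = rpos (f51 s) - 1 \<and>
       zero s = zero (f51 s) + (if rpos s = 0 then 1 else 0)"
    using F by blast
qed



end
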